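(* Let $G=(\mathbb Z/a_1\mathbb Z)\times\dots\times(\mathbb Z/a_r\mathbb Z)$ be a finite Abelian group with $N=\exp(G)$ even, and let $f:G\to\mathbb Q$ be rational-valued. Let $2^m$ ($m\ge1$) be the highest power of $2$ dividing $N$ and $\ell=\phi(N/2^m)$. For each $k\ge 1$ let $u_k,v_k\in(\mathbb Z/N\mathbb Z)^\times$ satisfy $2^k\equiv u_k+v_k\pmod N$, chosen so that $u_1=v_1=1$ and $u_{k+\ell}=u_k$, $v_{k+\ell}=v_k$ for all $k\ge m$. For $x\in G$ set $$\widehat A_k=\widehat M_4(f;u_kx,v_kx,-u_kx),\qquad \widehat B_k=\widehat M_6(f;u_kx,v_kx,u_kx,v_kx,-u_{k+1}x).$$ Then for every $x\in\operatorname{supp}(\widehat f)$, $$\widehat f(x)^{2^m(2^\ell-1)}=\frac{\prod_{k=1}^{\ell+m-1}(\widehat B_k/\widehat A_{k+1})^{2^{\ell+m-1-k}}}{\prod_{k=1}^{m-1}(\widehat B_k/\widehat A_{k+1})^{2^{m-1-k}}},$$ all quantities $\widehat A_{k+1}$ appearing being nonzero.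
   Context: Elements of $G$ are tuples with componentwise addition modulo $a_k$; $\exp(G)=\min\{n>0: nx=0\ \forall x\in G\}$; $\phi$ is Euler's phi function; $(\mathbb Z/N\mathbb Z)^\times$ is the set of residues coprime to $N$. Define $\chi(x,y)=\exp\left(2\pi i\sum_{k=1}^r \frac{x[k]y[k]}{a_k}\right)$, $\widehat f(x)=\sum_{y\in G}f(y)\overline{\chi(x,y)}$, $\operatorname{supp}(\widehat f)=\{x:\widehat f(x)\ne0\}$, and the transformed autocorrelations $\widehat M_n(f;x_1,\dots,x_{n-1})=\widehat f(x_1)\cdots\widehat f(x_{n-1})\widehat f(-(x_1+\dots+x_{n-1}))$. *)

theory Defs
  imports "HOL-Analysis.Analysis" "HOL-Number_Theory.Number_Theory"
begin

text \<open>The group G = Z/a_1 x ... x Z/a_r is encoded by the list of moduli a = [a_1,...,a_r].\<close>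

definition grp :: "nat list \<Rightarrow> (nat \<Rightarrow> int) set" where
  "grp a = {x. (\<forall>k<length a. 0 \<le> x k \<and> x k < int (a ! k)) \<and> (\<forall>k\<ge>length a. x k = 0)}"

definition gzero :: "nat \<Rightarrow> int" where
  "gzero = (\<lambda>k. 0)"

definition gadd :: "nat list \<Rightarrow> (nat \<Rightarrow> int) \<Rightarrow> (nat \<Rightarrow> int) \<Rightarrow> (nat \<Rightarrow> int)" where
  "gadd a x y = (\<lambda>k. if k < length a then (x k + y k) mod int (a ! k) else 0)"

definition gneg :: "nat list \<Rightarrow> (nat \<Rightarrow> int) \<Rightarrow> (nat \<Rightarrow> int)" where
  "gneg a x = (\<lambda>k. if k < length a then (- x k) mod int (a ! k) else 0)"

definition gsmul :: "nat list \<Rightarrow> int \<Rightarrow> (nat \<Rightarrow> int) \<Rightarrow> (nat \<Rightarrow> int)" where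
  "gsmul a n x = (\<lambda>k. if k < length a then (n * x k) mod int (a ! k) else 0)"

definition gsum :: "nat list \<Rightarrow> (nat \<Rightarrow> int) list \<Rightarrow> (nat \<Rightarrow> int)" where
  "gsum a xs = foldr (gadd a) xs gzero"

definition expG :: "nat list \<Rightarrow> nat" where
  "expG a = (LEAST n. n > 0 \<and> (\<forall>x\<in>grp a. gsmul a (int n) x = gzero))"

definition chi :: "nat list \<Rightarrow> (nat \<Rightarrow> int) \<Rightarrow> (nat \<Rightarrow> int) \<Rightarrow> complex" where
  "chi a x y = exp (2 * of_real pi * \<i> *
      of_real (\<Sum>k<length a. of_int (x k * y k) / of_nat (a ! k)))"

definition fhat :: "nat list \<Rightarrow> ((nat \<Rightarrow> int) \<Rightarrow> rat) \<Rightarrow> (nat \<Rightarrow> int) \<Rightarrow> complex" where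
  "fhat a f x = (\<Sum>y\<in>grp a. of_real (of_rat (f y)) * cnj (chi a x y))"

text \<open>Transformed autocorrelation: Mhat_n(f; x_1,...,x_{n-1}) for the list xs = [x_1,...,x_{n-1}].\<close>
definition Mhat :: "nat list \<Rightarrow> ((nat \<Rightarrow> int) \<Rightarrow> rat) \<Rightarrow> (nat \<Rightarrow> int) list \<Rightarrow> complex" where
  "Mhat a f xs = (\<Prod>x\<leftarrow>xs. fhat a f x) * fhat a f (gneg a (gsum a xs))"

end

theory Submission
  imports Defs "HOL-Computational_Algebra.Computational_Algebra"
begin

definition ip :: "int poly \<Rightarrow> complex poly" where "ip = map_poly of_int"

lemma ip_add[simp]: "ip (p + q) = ip p + ip q"
  by (rule poly_eqI) (simp add: ip_def coeff_map_poly)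
lemma ip_diff[simp]: "ip (p - q) = ip p - ip q"
  by (rule poly_eqI) (simp add: ip_def coeff_map_poly)
lemma ip_mult[simp]: "ip (p * q) = ip p * ip q"
  by (rule poly_eqI) (simp add: ip_def coeff_map_poly coeff_mult)
lemma ip_const[simp]: "ip [:c:] = [:of_int c:]"
  by (rule poly_eqI) (simp add: ip_def coeff_map_poly coeff_pCons split: nat.split)
lemma ip_1[simp]: "ip 1 = 1"
  by (simp add: ip_def)
lemma ip_0[simp]: "ip 0 = 0"
  by (simp add: ip_def)
lemma ip_monom[simp]: "ip (Polynomial.monom c n) = Polynomial.monom (of_int c) n"
  by (simp add: ip_def map_poly_monom)
lemma ip_power[simp]: "ip (p ^ n) = ip p ^ n"
  by (induct n) auto
lemma ip_smult[simp]: "ip (Polynomial.smult c p) = Polynomial.smult (of_int c) (ip p)"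
  by (rule poly_eqI) (simp add: ip_def coeff_map_poly)
lemma ip_pCons[simp]: "ip (pCons a p) = pCons (of_int a) (ip p)"
  by (rule poly_eqI) (simp add: ip_def coeff_map_poly coeff_pCons split: nat.split)
lemma ip_pcompose[simp]: "ip (pcompose p q) = pcompose (ip p) (ip q)"
  by (induct p) (auto simp: pcompose_pCons)

definition pc :: "int \<Rightarrow> int poly \<Rightarrow> int poly \<Rightarrow> bool" where
  "pc p A B \<longleftrightarrow> [:p:] dvd (A - B)"

lemma pc_refl[simp]: "pc p A A" by (simp add: pc_def)
lemma pc_sym: "pc p A B \<Longrightarrow> pc p B A"
  unfolding pc_def by (metis dvd_minus_iff minus_diff_eq)
lemma pc_trans: "pc p A B \<Longrightarrow> pc p B C \<Longrightarrow> pc p A C"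
  unfolding pc_def by (metis diff_add_cancel add_diff_eq dvd_add)
lemma pc_add: "pc p A B \<Longrightarrow> pc p C D \<Longrightarrow> pc p (A + C) (B + D)"
  unfolding pc_def by (metis add_diff_add dvd_add)
lemma pc_mult: "pc p A B \<Longrightarrow> pc p C D \<Longrightarrow> pc p (A * C) (B * D)"
proof -
  assume "pc p A B" "pc p C D"
  moreover have "A * C - B * D = A * (C - D) + (A - B) * D" by (simp add: algebra_simps)
  ultimately show ?thesis unfolding pc_def by (metis dvd_add dvd_mult dvd_mult2)
qed

lemma binom_frob:
  fixes A B :: "int poly" and p :: nat
  assumes "prime p"
  shows "pc (int p) ((A + B) ^ p) (A ^ p + B ^ p)"
proof -
  have p0: "p \<noteq> 0" using assms by auto
  define t where "t k = of_nat (p choose k) * A ^ k * B ^ (p - k)" for k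
  define e where "e k = (if k = 0 then B ^ p else 0) + (if k = p then A ^ p else 0)" for k
  have "(A + B) ^ p = (\<Sum>k\<le>p. t k)" unfolding t_def by (rule binomial_ring)
  moreover have "(\<Sum>k\<le>p. e k) = A ^ p + B ^ p"
    unfolding e_def by (simp add: sum.distrib add.commute)
  moreover have "[:int p:] dvd (\<Sum>k\<le>p. t k - e k)"
  proof (rule dvd_sum)
    fix k assume k: "k \<in> {..p}"
    show "[:int p:] dvd t k - e k"
    proof (cases "k = 0 \<or> k = p")
      case True then show ?thesis using p0 by (auto simp: t_def e_def)
    next
      case False
      then have "p dvd (p choose k)" using k assms by (intro dvd_choose_prime) auto
      then obtain m where m: "p choose k = p * m" by blast
      have eq: "t k - e k = [:int p:] * (of_nat m * A ^ k * B ^ (p - k))"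
        using False by (simp add: t_def e_def m of_nat_poly[of p] algebra_simps)
      show ?thesis unfolding eq by (rule dvd_triv_left)
    qed
  qed
  ultimately show ?thesis unfolding pc_def by (simp add: sum_subtractf)
qed

lemma fermat_int:
  fixes a :: int and p :: nat
  assumes "prime p"
  shows "int p dvd a ^ p - a"
proof -
  define b where "b = nat (a mod int p)"
  have p0: "p > 0" using assms prime_gt_0_nat by blast
  have ab: "[a = int b] (mod int p)" using p0 by (simp add: b_def cong_def)
  have "[b ^ p = b] (mod p)"
  proof (cases "p dvd b")
    case True
    have "b dvd b ^ p" using p0 by simp
    then have "p dvd b ^ p" using True by (rule dvd_trans[rotated])
    then show ?thesis using True by (simp add: cong_def dvd_eq_mod_eq_0)
  next
    case False
    then have "[b ^ (p - 1) = 1] (mod p)" using assms by (rule fermat_theorem[rotated])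
    then have "[b ^ (p - 1) * b = 1 * b] (mod p)" by (rule cong_scalar_right)
    moreover have "b ^ (p - 1) * b = b ^ p" using p0 by (metis Suc_diff_1 power_Suc2)
    ultimately show ?thesis by simp
  qed
  then have "[int b ^ p = int b] (mod int p)" by (metis cong_int_iff of_nat_power)
  then have "[a ^ p = a] (mod int p)"
    by (meson ab cong_pow cong_sym cong_trans)
  then show ?thesis by (simp add: cong_iff_dvd_diff)
qed

lemma pcompose_frob:
  fixes h :: "int poly" and p :: nat
  assumes "prime p"
  shows "pc (int p) (pcompose h (Polynomial.monom 1 p)) (h ^ p)"
proof (induct h)
  case 0
  then show ?case using assms by (simp add: zero_power prime_gt_0_nat)
next
  case (pCons a h)
  have e1: "pcompose (pCons a h) (Polynomial.monom 1 p) = [:a:] + Polynomial.monom 1 p * pcompose h (Polynomial.monom 1 p)"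
    by (simp add: pcompose_pCons)
  have e2: "pCons a h = [:a:] + Polynomial.monom 1 1 * h"
    by (simp add: monom_Suc monom_0)
  have s1: "pc (int p) ((pCons a h) ^ p) ([:a:] ^ p + (Polynomial.monom 1 1 * h) ^ p)"
    unfolding e2 by (rule binom_frob[OF assms])
  have s2: "(Polynomial.monom 1 1 * h) ^ p = Polynomial.monom 1 p * h ^ p"
    by (simp add: power_mult_distrib monom_power)
  have s3: "pc (int p) ([:a:] ^ p) [:a:]"
    using fermat_int[OF assms, of a] by (simp add: pc_def poly_const_pow)
  have s4: "pc (int p) ((pCons a h) ^ p) ([:a:] + Polynomial.monom 1 p * h ^ p)"
    using pc_trans[OF s1[unfolded s2] pc_add[OF s3 pc_refl]] .
  have s5: "pc (int p) ([:a:] + Polynomial.monom 1 p * pcompose h (Polynomial.monom 1 p)) ([:a:] + Polynomial.monom 1 p * h ^ p)"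
    by (intro pc_add pc_mult pc_refl pCons)
  show ?case unfolding e1 using pc_trans[OF s5 pc_sym[OF s4]] .
qed


lemma coeff_lemma:
  fixes g k :: "int poly" and p c :: int
  assumes mon: "lead_coeff g = 1" and dg: "degree g \<ge> 1"
    and dv: "[:p:] dvd (g * k - [:c:])"
  shows "p dvd c"
proof (rule ccontr)
  assume npc: "\<not> p dvd c"
  show False
  proof (cases "\<forall>i. p dvd Polynomial.coeff k i")
    case True
    then have "[:p:] dvd k" by (simp add: const_poly_dvd_iff)
    then have "[:p:] dvd g * k" by (rule dvd_mult)
    from dvd_diff[OF this dv] have "[:p:] dvd [:c:]" by simp
    then show False using npc by simp
  next
    case False
    define J where "J = {i. \<not> p dvd Polynomial.coeff k i}"
    have J0: "J \<noteq> {}" using False J_def by auto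
    have Jfin: "finite J"
    proof (rule finite_subset[of _ "{..degree k}"])
      show "J \<subseteq> {..degree k}"
        unfolding J_def by (auto intro: ccontr simp: coeff_eq_0)
    qed simp
    define j where "j = Max J"
    have jJ: "j \<in> J" using J0 Jfin j_def by simp
    have jmax: "\<And>i. i > j \<Longrightarrow> p dvd Polynomial.coeff k i"
      using Jfin j_def J_def by (metis (mono_tags, lifting) Max_ge leD mem_Collect_eq)
    define d where "d = degree g"
    define n where "n = d + j"
    have "p dvd Polynomial.coeff (g * k - [:c:]) n" using dv by (simp add: const_poly_dvd_iff)
    moreover have "Polynomial.coeff [:c:] n = 0" using dg by (simp add: n_def d_def coeff_pCons split: nat.split)
    ultimately have A: "p dvd (\<Sum>i\<le>n. Polynomial.coeff g i * Polynomial.coeff k (n - i))"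
      by (simp add: coeff_mult)
    have B: "(\<Sum>i\<le>n. (if i = d then Polynomial.coeff k (n - i) else 0)) = Polynomial.coeff k j"
      by (simp add: n_def)
    have C: "p dvd (\<Sum>i\<le>n. Polynomial.coeff g i * Polynomial.coeff k (n - i) - (if i = d then Polynomial.coeff k (n - i) else 0))"
    proof (rule dvd_sum)
      fix i assume "i \<in> {..n}"
      show "p dvd Polynomial.coeff g i * Polynomial.coeff k (n - i) - (if i = d then Polynomial.coeff k (n - i) else 0)"
      proof (cases "i < d")
        case True
        then have "p dvd Polynomial.coeff k (n - i)" using jmax n_def by simp
        then show ?thesis using True by simp
      next
        case False
        then show ?thesis
          using mon by (cases "i = d") (auto simp: d_def coeff_eq_0)
      qed
    qed
    have "p dvd (\<Sum>i\<le>n. Polynomial.coeff g i * Polynomial.coeff k (n - i)) - (\<Sum>i\<le>n. (if i = d then Polynomial.coeff k (n - i) else 0))"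
      using C by (simp only: sum_subtractf)
    from dvd_diff[OF A this] have "p dvd Polynomial.coeff k j" using B by simp
    then show False using jJ J_def by simp
  qed
qed


lemma Q0_props:
  fixes \<omega> :: complex
  assumes N: "N > 0" and w: "\<omega> ^ N = 1"
  shows "(Polynomial.monom 1 N - 1 :: int poly) \<noteq> 0" "poly (ip (Polynomial.monom 1 N - 1)) \<omega> = 0"
    "lead_coeff (Polynomial.monom 1 N - 1 :: int poly) = 1"
proof -
  have c: "Polynomial.coeff (Polynomial.monom 1 N - 1 :: int poly) N = 1"
    using N by (simp add: coeff_monom)
  then show "(Polynomial.monom 1 N - 1 :: int poly) \<noteq> 0" by (metis coeff_0 zero_neq_one)
  show "poly (ip (Polynomial.monom 1 N - 1)) \<omega> = 0" using w by (simp add: poly_monom)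
  have "degree (Polynomial.monom 1 N - 1 :: int poly) \<le> N"
    by (rule degree_diff_le) (auto simp: degree_monom_le)
  moreover have "N \<le> degree (Polynomial.monom 1 N - 1 :: int poly)"
    using c by (intro le_degree) simp
  ultimately have "degree (Polynomial.monom 1 N - 1 :: int poly) = N" by simp
  then show "lead_coeff (Polynomial.monom 1 N - 1 :: int poly) = 1" using c by simp
qed

lemma minpoly_exists:
  fixes \<omega> :: complex
  assumes N: "N > 0" and w: "\<omega> ^ N = 1"
  shows "\<exists>g. lead_coeff g = 1 \<and> degree g \<ge> 1 \<and> poly (ip g) \<omega> = 0 \<and>
             (\<forall>q. poly (ip q) \<omega> = 0 \<longrightarrow> g dvd q)"
proof -
  define Q0 :: "int poly" where "Q0 = Polynomial.monom 1 N - 1"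
  note Q = Q0_props[OF N w, folded Q0_def]
  define P where "P q \<longleftrightarrow> q \<noteq> 0 \<and> poly (ip q) \<omega> = 0" for q
  have "P Q0" using Q by (simp add: P_def)
  then obtain g0 where g0: "P g0" and g0min: "\<forall>q. P q \<longrightarrow> degree g0 \<le> degree q"
    using ex_has_least_nat[of P Q0 degree] by blast
  define g1 where "g1 = primitive_part g0"
  have g0nz: "g0 \<noteq> 0" using g0 P_def by simp
  have cg1: "content g1 = 1" using g0nz by (simp add: g1_def)
  have dg1: "degree g1 = degree g0" by (simp add: g1_def)
  have "g0 = Polynomial.smult (content g0) g1" by (simp add: g1_def)
  then have "poly (ip g0) \<omega> = of_int (content g0) * poly (ip g1) \<omega>"
    by (metis ip_smult poly_smult)
  moreover have "content g0 \<noteq> 0" using g0nz by simp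
  ultimately have g1w: "poly (ip g1) \<omega> = 0" using g0 P_def by simp
  have g1nz: "g1 \<noteq> 0" using g0nz by (simp add: g1_def)
  have div1: "g1 dvd q" if qw: "poly (ip q) \<omega> = 0" for q
  proof -
    define r where "r = pseudo_mod q g1"
    obtain a s where as: "a \<noteq> 0" "Polynomial.smult a q = g1 * s + r"
      using pseudo_mod(1)[OF g1nz, of q] r_def by blast
    have rdeg: "r = 0 \<or> degree r < degree g1" using pseudo_mod(2)[OF g1nz, of q] r_def by blast
    have "poly (ip (Polynomial.smult a q)) \<omega> = poly (ip (g1 * s + r)) \<omega>" using as by simp
    then have "poly (ip r) \<omega> = 0" using qw g1w by simp
    then have r0: "r = 0" using rdeg g0min dg1 unfolding P_def by force
    have "fract_poly (Polynomial.smult a q) = fract_poly (g1 * s)" using as r0 by simp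
    then have "Polynomial.smult (to_fract a) (fract_poly q) = fract_poly g1 * fract_poly s" by simp
    then have "fract_poly q = fract_poly g1 * Polynomial.smult (inverse (to_fract a)) (fract_poly s)"
      using as(1) by (metis (no_types, lifting) mult_smult_right smult_smult inverse_eq_divide
          divide_self_if to_fract_eq_0_iff smult_1_left mult_1_left[of "inverse (to_fract a)"] 
          left_inverse)
    then have "fract_poly g1 dvd fract_poly q" by (rule dvdI)
    then show "g1 dvd q" using cg1 by (rule fract_poly_dvdD)
  qed
  obtain h1 where h1: "Q0 = g1 * h1" using div1[OF Q(2)] by blast
  define c where "c = lead_coeff g1"
  have "c * lead_coeff h1 = 1" using h1 Q(3) by (simp add: c_def lead_coeff_mult)
  then have cc: "c * c = 1" using zmult_eq_1_iff by auto
  define g where "g = Polynomial.smult c g1"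
  have "lead_coeff g = 1" unfolding g_def lead_coeff_smult c_def[symmetric] using cc .
  moreover have gw: "poly (ip g) \<omega> = 0" using g1w by (simp add: g_def)
  moreover have "\<forall>q. poly (ip q) \<omega> = 0 \<longrightarrow> g dvd q"
  proof (intro allI impI)
    fix q assume "poly (ip q) \<omega> = 0"
    then obtain t where "q = g1 * t" using div1 by blast
    then have "q = g * Polynomial.smult c t" using cc by (simp add: g_def)
    then show "g dvd q" by (rule dvdI)
  qed
  moreover have "degree g \<ge> 1"
  proof (rule ccontr)
    assume "\<not> degree g \<ge> 1"
    then have "degree g = 0" by simp
    then have "g = [:1:]" using \<open>lead_coeff g = 1\<close> by (metis degree_eq_zeroE lead_coeff_pCons(2) pCons_0_0) 
    then show False using gw by simp
  qed
  ultimately show ?thesis by blast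
qed

lemma frob_root:
  fixes \<omega> :: complex
  assumes N: "N > 0" and w: "\<omega> ^ N = 1" and p: "prime p" and pN: "\<not> p dvd N"
    and qw: "poly (ip q) \<omega> = 0"
  shows "poly (ip q) (\<omega> ^ p) = 0"
proof -
  obtain g where mon: "lead_coeff g = 1" and dg: "degree g \<ge> 1" and gw: "poly (ip g) \<omega> = 0"
    and gdiv: "\<forall>q. poly (ip q) \<omega> = 0 \<longrightarrow> g dvd q"
    using minpoly_exists[OF N w] by blast
  define Q0 :: "int poly" where "Q0 = Polynomial.monom 1 N - 1"
  note Q = Q0_props[OF N w, folded Q0_def]
  have gp: "poly (ip g) (\<omega> ^ p) = 0"
  proof (rule ccontr)
    assume ne: "poly (ip g) (\<omega> ^ p) \<noteq> 0"
    obtain h where h: "Q0 = g * h" using gdiv Q(2) by blast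
    have "(\<omega> ^ p) ^ N = 1" using w by (metis power_mult power_mult_distrib mult.commute power_one)
    then have "poly (ip Q0) (\<omega> ^ p) = 0" by (simp add: Q0_def poly_monom)
    then have hp: "poly (ip h) (\<omega> ^ p) = 0" using ne h by simp
    define H where "H = pcompose h (Polynomial.monom 1 p)"
    have Hw: "poly (ip H) \<omega> = 0" using hp by (simp add: H_def poly_pcompose poly_monom)
    have "[:int p:] dvd (H - h ^ p)" using pcompose_frob[OF p, of h] by (simp add: pc_def H_def)
    then obtain s where s: "H - h ^ p = [:int p:] * s" by blast
    have "poly (ip (H - h ^ p)) \<omega> = poly (ip ([:int p:] * s)) \<omega>" using s by simp
    then have sv: "- ((poly (ip h) \<omega>) ^ p) = of_nat p * poly (ip s) \<omega>" using Hw by simp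
    have e1: "pderiv Q0 = Polynomial.monom (of_nat N) (N - 1)"
      unfolding Q0_def pderiv_diff pderiv_monom by simp
    have e2: "pderiv Q0 = g * pderiv h + h * pderiv g" unfolding h by (rule pderiv_mult)
    have "poly (ip (Polynomial.monom (of_nat N) (N - 1))) \<omega> = poly (ip (g * pderiv h + h * pderiv g)) \<omega>"
      using e1 e2 by (simp only:)
    then have der: "of_nat N * \<omega> ^ (N - 1) = poly (ip h) \<omega> * poly (ip (pderiv g)) \<omega>"
      using gw by (simp add: poly_monom)
    define G where "G = poly (ip (pderiv g)) \<omega>"
    define hv where "hv = poly (ip h) \<omega>"
    define sw where "sw = poly (ip s) \<omega>"
    have sv': "of_nat p * sw = - (hv ^ p)" using sv by (simp add: hv_def sw_def)
    have der': "hv * G * \<omega> = of_nat N * \<omega> ^ N"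
    proof -
      have "hv * G * \<omega> = of_nat N * \<omega> ^ (N - 1) * \<omega>" using der by (simp add: hv_def G_def)
      also have "\<dots> = of_nat N * \<omega> ^ N" using N by (simp add: power_Suc2[symmetric] mult.assoc)
      finally show ?thesis .
    qed
    define T where "T = [:int N ^ p:] + [:int p:] * (pderiv g ^ p * Polynomial.monom 1 p * s)"
    have "poly (ip T) \<omega> = of_nat N ^ p + of_nat p * (G ^ p * \<omega> ^ p * sw)"
      by (simp add: T_def poly_monom G_def sw_def)
    also have "of_nat p * (G ^ p * \<omega> ^ p * sw) = G ^ p * \<omega> ^ p * (of_nat p * sw)"
      by (simp only: mult_ac)
    also have "\<dots> = - ((hv * G * \<omega>) ^ p)" unfolding sv' power_mult_distrib by (simp only: mult_ac mult_minus_right)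
    also have "\<dots> = - (of_nat N ^ p)" unfolding der' using w by simp
    finally have "poly (ip T) \<omega> = 0" by simp
    then obtain k where k: "T = g * k" using gdiv by blast
    have "g * k - [:int N ^ p:] = [:int p:] * (pderiv g ^ p * Polynomial.monom 1 p * s)"
      using k T_def by simp
    then have "[:int p:] dvd (g * k - [:int N ^ p:])" by (metis dvd_triv_left)
    then have "int p dvd int N ^ p" by (rule coeff_lemma[OF mon dg])
    then have "p dvd N ^ p" by (metis of_nat_dvd_iff of_nat_power)
    then have "p dvd N" by (rule prime_dvd_power[OF p])
    then show False using pN by simp
  qed
  obtain r where "q = g * r" using gdiv qw by blast
  then show ?thesis using gp by simp
qed

lemma galois_root:
  fixes \<omega> :: complex
  assumes N: "N > 0" and w: "\<omega> ^ N = 1" and cop: "coprime u N"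
    and qw: "poly (ip q) \<omega> = 0"
  shows "poly (ip q) (\<omega> ^ u) = 0"
  using cop
proof (induct u rule: less_induct)
  case (less u)
  show ?case
  proof (cases "u \<le> 1")
    case True
    then consider "u = 0" | "u = 1" by linarith
    then show ?thesis
    proof cases
      case 1
      then have "N = 1" using less.prems by simp
      then have "\<omega> = 1" using w by simp
      then show ?thesis using qw 1 by simp
    next
      case 2
      then show ?thesis using qw by simp
    qed
  next
    case False
    then obtain p where p: "prime p" "p dvd u" using prime_factor_nat[of u] by auto
    then obtain u' where u': "u = p * u'" by blast
    have "u' > 0" using False u' by (cases "u' = 0") auto
    then have "u' < u" using u' prime_gt_1_nat[OF p(1)] by (simp add: n_less_m_mult_n)
    moreover have "coprime u' N" using less.prems u' by simp
    ultimately have IH: "poly (ip q) (\<omega> ^ u') = 0" using less.hyps by blast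
    have "\<not> p dvd N"
    proof
      assume "p dvd N"
      then have "coprime p N" "p dvd N" using less.prems u' by auto
      then have "is_unit p" by (metis coprime_common_divisor dvd_refl)
      then show False using p(1) by simp
    qed
    moreover have "(\<omega> ^ u') ^ N = 1" using w by (metis power_mult power_mult_distrib mult.commute power_one)
    ultimately have "poly (ip q) ((\<omega> ^ u') ^ p) = 0" using frob_root[OF N _ p(1)] IH by blast
    then show ?thesis using u' by (metis power_mult mult.commute)
  qed
qed


lemma gsmul_grp: "\<forall>k<length a. a ! k > 0 \<Longrightarrow> gsmul a c x \<in> grp a"
  by (auto simp: gsmul_def grp_def)

lemma gadd_smul: "gadd a (gsmul a c x) (gsmul a d x) = gsmul a (c + d) x"
  by (rule ext) (simp add: gadd_def gsmul_def mod_add_eq distrib_right)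

lemma gadd_zero: "gadd a (gsmul a c x) gzero = gsmul a c x"
  by (rule ext) (simp add: gadd_def gsmul_def gzero_def)

lemma gneg_smul: "gneg a (gsmul a c x) = gsmul a (- c) x"
  by (rule ext) (simp add: gneg_def gsmul_def mod_minus_eq)

lemma gsmul_one: "x \<in> grp a \<Longrightarrow> gsmul a 1 x = x"
  by (rule ext) (auto simp: gsmul_def grp_def)

lemma gsmul_cong:
  assumes "\<forall>k<length a. a ! k dvd N" and "[c = d] (mod int N)"
  shows "gsmul a c x = gsmul a d x"
proof (rule ext)
  fix k
  show "gsmul a c x k = gsmul a d x k"
  proof (cases "k < length a")
    case True
    then have "int (a ! k) dvd int N" using assms(1) by simp
    moreover have "int N dvd c - d" using assms(2) by (simp add: cong_iff_dvd_diff)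
    ultimately have "int (a ! k) dvd c - d" by (rule dvd_trans)
    then have "int (a ! k) dvd (c - d) * x k" by simp
    then have "(c * x k) mod int (a ! k) = (d * x k) mod int (a ! k)"
      by (simp add: mod_eq_dvd_iff left_diff_distrib)
    then show ?thesis using True by (simp add: gsmul_def)
  qed (simp add: gsmul_def)
qed

lemma expG_props:
  assumes apos: "\<forall>k<length a. a ! k > 0"
  shows "expG a > 0" "\<forall>z\<in>grp a. gsmul a (int (expG a)) z = gzero"
    "\<forall>k<length a. a ! k dvd expG a"
proof -
  define M where "M = prod_list a"
  have Mpos: "M > 0" unfolding M_def using apos
    by (metis in_set_conv_nth prod_list_zero_iff bot_nat_0.not_eq_extremum)
  have "\<forall>z\<in>grp a. gsmul a (int M) z = gzero"
  proof
    fix z assume "z \<in> grp a"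
    show "gsmul a (int M) z = gzero"
    proof (rule ext)
      fix k
      show "gsmul a (int M) z k = gzero k"
      proof (cases "k < length a")
        case True
        then have "a ! k dvd M" unfolding M_def by (intro prod_list_dvd) simp
        then have "int (a ! k) dvd int M * z k" by simp
        then show ?thesis using True by (simp add: gsmul_def gzero_def)
      qed (simp add: gsmul_def gzero_def)
    qed
  qed
  then have ex: "\<exists>n. n > 0 \<and> (\<forall>z\<in>grp a. gsmul a (int n) z = gzero)" using Mpos by blast
  have L: "expG a > 0 \<and> (\<forall>z\<in>grp a. gsmul a (int (expG a)) z = gzero)"
    unfolding expG_def by (rule LeastI_ex[OF ex])
  then show "expG a > 0" "\<forall>z\<in>grp a. gsmul a (int (expG a)) z = gzero" by auto
  show "\<forall>k<length a. a ! k dvd expG a"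
  proof (intro allI impI)
    fix k assume k: "k < length a"
    show "a ! k dvd expG a"
    proof (cases "a ! k = 1")
      case False
      then have ak: "a ! k > 1" using apos k by (metis One_nat_def Suc_lessI)
      define e where "e = (\<lambda>j. if j = k then 1 else 0 :: int)"
      have "e \<in> grp a" using ak k apos by (auto simp: e_def grp_def)
      then have "gsmul a (int (expG a)) e k = 0" using L by (simp add: gzero_def)
      then have "int (a ! k) dvd int (expG a)" using k by (simp add: gsmul_def e_def dvd_eq_mod_eq_0)
      then show ?thesis by simp
    qed simp
  qed
qed


lemma ip_sum: "ip (sum g S) = (\<Sum>y\<in>S. ip (g y))"
  by (induct S rule: infinite_finite_induct) auto

lemma rat_clear:
  fixes r :: "'a \<Rightarrow> rat"
  assumes "finite S"
  shows "\<exists>D::int. D > 0 \<and> (\<forall>y\<in>S. \<exists>n::int. of_int D * r y = of_int n)"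
  using assms
proof (induct S rule: finite_induct)
  case empty
  show ?case by (rule exI[of _ 1]) simp
next
  case (insert y0 S)
  then obtain D where D: "D > 0" "\<forall>y\<in>S. \<exists>n::int. of_int D * r y = of_int n" by blast
  obtain n0 d0 where q: "quotient_of (r y0) = (n0, d0)" by (cases "quotient_of (r y0)") auto
  have d0: "d0 > 0" using q by (rule quotient_of_denom_pos)
  have r0: "r y0 = of_int n0 / of_int d0" using q by (rule quotient_of_div)
  show ?case
  proof (rule exI[of _ "D * d0"], intro conjI ballI)
    show "D * d0 > 0" using D d0 by simp
    fix y assume "y \<in> insert y0 S"
    then consider "y = y0" | "y \<in> S" by blast
    then show "\<exists>n::int. of_int (D * d0) * r y = of_int n"
    proof cases
      case 1
      have "of_int (D * d0) * r y = of_int (D * n0)" using d0 by (simp add: 1 r0)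
      then show ?thesis by blast
    next
      case 2
      then obtain n where "of_int D * r y = of_int n" using D by blast
      then have "of_int (D * d0) * r y = of_int (n * d0)" by (simp add: algebra_simps)
      then show ?thesis by blast
    qed
  qed
qed

definition Eexp :: "nat list \<Rightarrow> nat \<Rightarrow> (nat \<Rightarrow> int) \<Rightarrow> (nat \<Rightarrow> int) \<Rightarrow> nat" where
  "Eexp a N z y = (\<Sum>k<length a. nat (z k) * nat (y k) * (N div a ! k))"

lemma zeta_pow: "N > 0 \<Longrightarrow> exp (- (2 * of_real pi * \<i>) / of_nat N) ^ N = (1::complex)"
proof -
  assume N: "N > 0"
  have "exp (- (2 * of_real pi * \<i>) / of_nat N) ^ N = exp (of_nat N * (- (2 * of_real pi * \<i>) / of_nat N))"
    by (rule exp_of_nat_mult[symmetric])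
  also have "\<dots> = exp (- (2 * of_real pi * \<i>))" using N by simp
  also have "\<dots> = 1" by (simp add: exp_minus)
  finally show ?thesis .
qed

lemma chi_zeta:
  assumes apos: "\<forall>k<length a. a ! k > 0" and dvdN: "\<forall>k<length a. a ! k dvd N" and N: "N > 0"
    and z: "z \<in> grp a" and y: "y \<in> grp a"
  shows "cnj (chi a z y) = exp (- (2 * of_real pi * \<i>) / of_nat N) ^ Eexp a N z y"
proof -
  have trm: "of_int (z k * y k) / of_nat (a ! k) = real (nat (z k) * nat (y k) * (N div a ! k)) / real N"
    if k: "k < length a" for k
  proof -
    have zk: "z k \<ge> 0" and yk: "y k \<ge> 0" using z y k by (auto simp: grp_def)
    have ak: "real (a ! k) > 0" using apos k by simp
    have "real (N div a ! k) = real N / real (a ! k)" using dvdN k by (simp add: real_of_nat_div)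
    moreover have "real (nat (z k)) = of_int (z k)" "real (nat (y k)) = of_int (y k)" using zk yk by simp_all
    ultimately show ?thesis using ak N by (simp add: field_simps)
  qed
  have S: "(\<Sum>k<length a. of_int (z k * y k) / of_nat (a ! k)) = real (Eexp a N z y) / real N"
    unfolding Eexp_def of_nat_sum sum_divide_distrib by (intro sum.cong refl) (rule trm, simp)
  have "cnj (chi a z y) = exp (cnj (2 * of_real pi * \<i> * of_real (real (Eexp a N z y) / real N)))"
    unfolding chi_def S by (rule exp_cnj)
  also have "cnj (2 * of_real pi * \<i> * of_real (real (Eexp a N z y) / real N)) =
      of_nat (Eexp a N z y) * (- (2 * of_real pi * \<i>) / of_nat N)"
    by simp
  also have "exp \<dots> = exp (- (2 * of_real pi * \<i>) / of_nat N) ^ Eexp a N z y"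
    by (rule exp_of_nat_mult)
  finally show ?thesis .
qed

lemma E_cong:
  assumes apos: "\<forall>k<length a. a ! k > 0" and dvdN: "\<forall>k<length a. a ! k dvd N"
    and x: "x \<in> grp a" and y: "y \<in> grp a"
  shows "[Eexp a N (gsmul a (int c) x) y = c * Eexp a N x y] (mod N)"
proof -
  have intE: "int (Eexp a N z y) = (\<Sum>k<length a. z k * y k * int (N div a ! k))" if "z \<in> grp a" for z
    using that y unfolding Eexp_def by (auto simp: grp_def intro!: sum.cong)
  have gz: "gsmul a (int c) x \<in> grp a" using apos by (auto simp: gsmul_def grp_def)
  have "int N dvd (\<Sum>k<length a. gsmul a (int c) x k * y k * int (N div a ! k) - int c * (x k * y k * int (N div a ! k)))"
  proof (rule dvd_sum)
    fix k assume "k \<in> {..<length a}"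
    then have k: "k < length a" by simp
    define t where "t = int c * x k"
    have ad: "int (a ! k) * int (N div a ! k) = int N" using dvdN k by (simp flip: of_nat_mult)
    have eq: "gsmul a (int c) x k = t - int (a ! k) * (t div int (a ! k))"
      using k by (simp add: gsmul_def t_def minus_div_mult_eq_mod[symmetric] mult.commute)
    have "gsmul a (int c) x k * y k * int (N div a ! k) - int c * (x k * y k * int (N div a ! k)) =
        - ((t div int (a ! k)) * y k * (int (a ! k) * int (N div a ! k)))"
      unfolding eq by (simp add: t_def algebra_simps)
    also have "\<dots> = int N * (- ((t div int (a ! k)) * y k))" unfolding ad by simp
    finally show "int N dvd gsmul a (int c) x k * y k * int (N div a ! k) - int c * (x k * y k * int (N div a ! k))"
      by simp
  qed
  then have "int N dvd int (Eexp a N (gsmul a (int c) x) y) - int c * int (Eexp a N x y)"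
    unfolding intE[OF gz] intE[OF x] sum_subtractf sum_distrib_left .
  then have "[int (Eexp a N (gsmul a (int c) x) y) = int (c * Eexp a N x y)] (mod int N)"
    by (simp add: cong_iff_dvd_diff)
  then show ?thesis by (simp only: cong_int_iff)
qed

lemma pow_cong:
  fixes w :: complex
  assumes "w ^ N = 1" and "[m = n] (mod N)"
  shows "w ^ m = w ^ n"
proof -
  have aux: "w ^ j = w ^ (j mod N)" for j
  proof -
    have "w ^ j = w ^ (N * (j div N) + j mod N)" by simp
    also have "\<dots> = (w ^ N) ^ (j div N) * w ^ (j mod N)" by (simp only: power_add power_mult)
    also have "\<dots> = w ^ (j mod N)" using assms(1) by simp
    finally show ?thesis .
  qed
  have "m mod N = n mod N" using assms(2) unfolding Cong.cong_def .
  then show ?thesis using aux[of m] aux[of n] by simp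
qed


lemma fhat_nonzero:
  assumes apos: "\<forall>k<length a. a ! k > 0" and x: "x \<in> grp a" and fx: "fhat a f x \<noteq> 0"
    and cop: "coprime c (int (expG a))"
  shows "fhat a f (gsmul a c x) \<noteq> 0"
proof
  assume F0: "fhat a f (gsmul a c x) = 0"
  define N where "N = expG a"
  have N: "N > 0" and dvdN: "\<forall>k<length a. a ! k dvd N"
    using expG_props[OF apos] by (auto simp: N_def)
  have fin: "finite (grp a)"
  proof (rule ccontr)
    assume "infinite (grp a)"
    then have "fhat a f x = 0" by (simp add: fhat_def)
    then show False using fx by simp
  qed
  obtain D :: int where D: "D > 0" "\<forall>y\<in>grp a. \<exists>n::int. of_int D * f y = of_int n"
    using rat_clear[OF fin, of f] by blast
  define cf where "cf y = (SOME n::int. of_int D * f y = of_int n)" for y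
  have cf: "of_int D * f y = of_int (cf y)" if "y \<in> grp a" for y
  proof -
    have "\<exists>n::int. of_int D * f y = of_int n" using D(2) that by blast
    then show ?thesis unfolding cf_def by (rule someI_ex)
  qed
  define \<zeta> :: complex where "\<zeta> = exp (- (2 * of_real pi * \<i>) / of_nat N)"
  have zN: "\<zeta> ^ N = 1" unfolding \<zeta>_def using N by (rule zeta_pow)
  define Q :: "int poly" where "Q = (\<Sum>y\<in>grp a. Polynomial.monom (cf y) (Eexp a N x y))"
  have polyQ: "poly (ip Q) w = (\<Sum>y\<in>grp a. of_int (cf y) * w ^ Eexp a N x y)" for w
    by (simp add: Q_def ip_sum poly_sum poly_monom)
  have key: "of_int D * fhat a f (gsmul a (int c') x) = poly (ip Q) (\<zeta> ^ c')" for c'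
  proof -
    have z: "gsmul a (int c') x \<in> grp a" using apos by (rule gsmul_grp)
    have "of_int D * fhat a f (gsmul a (int c') x) =
        (\<Sum>y\<in>grp a. of_int D * of_real (of_rat (f y)) * cnj (chi a (gsmul a (int c') x) y))"
      by (simp add: fhat_def sum_distrib_left mult.assoc)
    also have "\<dots> = (\<Sum>y\<in>grp a. of_int (cf y) * (\<zeta> ^ c') ^ Eexp a N x y)"
    proof (rule sum.cong[OF refl])
      fix y assume y: "y \<in> grp a"
      have "of_real (of_rat (of_int D * f y)) = (of_real (of_rat (of_int (cf y))) :: complex)"
        using cf[OF y] by simp
      then have e1: "of_int D * of_real (of_rat (f y)) = (of_int (cf y) :: complex)"
        by (simp add: of_rat_mult)
      have "cnj (chi a (gsmul a (int c') x) y) = \<zeta> ^ Eexp a N (gsmul a (int c') x) y"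
        unfolding \<zeta>_def by (rule chi_zeta[OF apos dvdN N z y])
      also have "\<dots> = \<zeta> ^ (c' * Eexp a N x y)"
        by (rule pow_cong[OF zN E_cong[OF apos dvdN x y]])
      also have "\<dots> = (\<zeta> ^ c') ^ Eexp a N x y" by (simp add: power_mult)
      finally show "of_int D * of_real (of_rat (f y)) * cnj (chi a (gsmul a (int c') x) y) =
          of_int (cf y) * (\<zeta> ^ c') ^ Eexp a N x y" using e1 by simp
    qed
    finally show ?thesis using polyQ by simp
  qed
  define c' where "c' = nat (c mod int N)"
  have c'eq: "int c' = c mod int N" using N by (simp add: c'_def)
  have "[c = int c'] (mod int N)" unfolding c'eq by (simp add: Cong.cong_def)
  then have gc: "gsmul a c x = gsmul a (int c') x" by (rule gsmul_cong[OF dvdN])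
  have "coprime (c mod int N) (int N)" using cop N by (simp add: N_def)
  then have c'cop: "coprime c' N" unfolding c'eq[symmetric] by simp
  have "poly (ip Q) (\<zeta> ^ c') = 0" using key[of c'] F0 gc by simp
  obtain v where v: "[c' * v = Suc 0] (mod N)" using cong_solve_coprime_nat[OF c'cop] by blast
  have "coprime (c' * v) N"
    using cong_imp_coprime[OF cong_sym[OF v]] by simp
  then have vcop: "coprime v N" by simp
  have "(\<zeta> ^ c') ^ N = 1" using zN by (metis power_mult mult.commute power_one)
  then have "poly (ip Q) ((\<zeta> ^ c') ^ v) = 0"
    using galois_root[OF N _ vcop] \<open>poly (ip Q) (\<zeta> ^ c') = 0\<close> by blast
  moreover have "(\<zeta> ^ c') ^ v = \<zeta>" using pow_cong[OF zN v] by (simp add: power_mult)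
  ultimately have "poly (ip Q) (\<zeta> ^ 1) = 0" by simp
  then have "of_int D * fhat a f (gsmul a (int 1) x) = 0" using key[of 1] by simp
  then have "fhat a f x = 0" using D(1) gsmul_one[OF x] by simp
  then show False using fx by simp
qed


lemma telescope:
  fixes P :: "nat \<Rightarrow> complex"
  assumes "\<forall>k\<in>{1..n+1}. P k \<noteq> 0"
  shows "(\<Prod>k = 1..n. (P k ^ 2 / P (k + 1)) ^ (2 ^ (n - k))) = P 1 ^ (2 ^ n) / P (n + 1)"
  using assms
proof (induct n)
  case 0
  then show ?case by simp
next
  case (Suc n)
  have IH: "(\<Prod>k = 1..n. (P k ^ 2 / P (k + 1)) ^ (2 ^ (n - k))) = P 1 ^ (2 ^ n) / P (n + 1)"
    using Suc by auto
  have nz: "P (n + 1) \<noteq> 0" using Suc.prems by auto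
  have "(\<Prod>k = 1..Suc n. (P k ^ 2 / P (k + 1)) ^ (2 ^ (Suc n - k))) =
      (\<Prod>k = 1..n. (P k ^ 2 / P (k + 1)) ^ (2 ^ (Suc n - k))) * (P (n + 1) ^ 2 / P (n + 2))"
    by (simp add: prod.cl_ivl_Suc)
  also have "(\<Prod>k = 1..n. (P k ^ 2 / P (k + 1)) ^ (2 ^ (Suc n - k))) =
      (\<Prod>k = 1..n. (P k ^ 2 / P (k + 1)) ^ (2 ^ (n - k))) ^ 2"
    unfolding prod_power_distrib
  proof (rule prod.cong[OF refl])
    fix k assume "k \<in> {1..n}"
    then have "Suc n - k = Suc (n - k)" by auto
    then show "(P k ^ 2 / P (k + 1)) ^ 2 ^ (Suc n - k) = ((P k ^ 2 / P (k + 1)) ^ 2 ^ (n - k)) ^ 2"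
      by (simp add: power_mult[symmetric] mult.commute)
  qed
  also have "\<dots> = (P 1 ^ (2 ^ n) / P (n + 1)) ^ 2" using IH by simp
  also have "(P 1 ^ (2 ^ n) / P (n + 1)) ^ 2 * (P (n + 1) ^ 2 / P (n + 2)) = (P 1 ^ (2 ^ n)) ^ 2 / P (n + 2)"
    using nz by (simp add: power_divide)
  also have "(P 1 ^ (2 ^ n)) ^ 2 = P 1 ^ (2 ^ Suc n)" by (simp add: power_mult[symmetric] mult.commute)
  finally show ?case by simp
qed


theorem theorem5:
  fixes a :: "nat list" and f :: "(nat \<Rightarrow> int) \<Rightarrow> rat"
    and u v :: "nat \<Rightarrow> nat" and x :: "nat \<Rightarrow> int"
  assumes apos: "\<forall>k<length a. a ! k > 0"
    and Neven: "even (expG a)"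
    and uv_unit: "\<forall>k\<ge>1. u k < expG a \<and> v k < expG a \<and>
                     coprime (u k) (expG a) \<and> coprime (v k) (expG a)"
    and uv_sum: "\<forall>k\<ge>1. [2 ^ k = u k + v k] (mod expG a)"
    and uv1: "u 1 = 1" "v 1 = 1"
    and uv_per: "\<forall>k\<ge>multiplicity 2 (expG a).
        u (k + totient (expG a div 2 ^ multiplicity 2 (expG a))) = u k \<and>
        v (k + totient (expG a div 2 ^ multiplicity 2 (expG a))) = v k"
    and xG: "x \<in> grp a"
    and xsupp: "fhat a f x \<noteq> 0"
  shows "let N = expG a; m = multiplicity 2 N; l = totient (N div 2 ^ m);
             ux = (\<lambda>k. gsmul a (int (u k)) x); vx = (\<lambda>k. gsmul a (int (v k)) x);
             A = (\<lambda>k. Mhat a f [ux k, vx k, gneg a (ux k)]);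
             B = (\<lambda>k. Mhat a f [ux k, vx k, ux k, vx k, gneg a (ux (k + 1))])
         in (\<forall>k\<in>{1..l + m - 1}. A (k + 1) \<noteq> 0) \<and>
            fhat a f x ^ (2 ^ m * (2 ^ l - 1)) =
              (\<Prod>k = 1..l + m - 1. (B k / A (k + 1)) ^ (2 ^ (l + m - 1 - k))) /
              (\<Prod>k = 1..m - 1. (B k / A (k + 1)) ^ (2 ^ (m - 1 - k)))"
proof -
  define N where "N = expG a"
  define m where "m = multiplicity 2 N"
  define l where "l = totient (N div 2 ^ m)"
  define F where "F c = fhat a f (gsmul a c x)" for c
  define A where "A = (\<lambda>k. Mhat a f [gsmul a (int (u k)) x, gsmul a (int (v k)) x, gneg a (gsmul a (int (u k)) x)])"
  define B where "B = (\<lambda>k. Mhat a f [gsmul a (int (u k)) x, gsmul a (int (v k)) x, gsmul a (int (u k)) x,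
       gsmul a (int (v k)) x, gneg a (gsmul a (int (u (k + 1))) x)])"
  have N: "N > 0" and dvdN: "\<forall>k<length a. a ! k dvd N"
    using expG_props[OF apos] by (auto simp: N_def)
  have "2 ^ 1 dvd N" using Neven by (simp add: N_def)
  then have m1: "m \<ge> 1" unfolding m_def using N by (intro multiplicity_geI) auto
  have Fnz: "F c \<noteq> 0" if "coprime c (int N)" for c
    unfolding F_def using fhat_nonzero[OF apos xG xsupp] that by (simp add: N_def)
  have Fu: "F (int (u k)) \<noteq> 0" "F (- int (u k)) \<noteq> 0" "F (int (v k)) \<noteq> 0" "F (- int (v k)) \<noteq> 0"
    if "k \<ge> 1" for k
    using uv_unit that by (auto intro!: Fnz simp: N_def)
  define P where "P k = F (int (u k)) * F (int (v k))" for k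
  define P' where "P' k = F (- int (u k)) * F (- int (v k))" for k
  have Pnz: "P k \<noteq> 0" "P' k \<noteq> 0" if "k \<ge> 1" for k
    using Fu[OF that] by (auto simp: P_def P'_def)
  have Aeq: "A k = P k * P' k" for k
  proof -
    have "gsum a [gsmul a (int (u k)) x, gsmul a (int (v k)) x, gneg a (gsmul a (int (u k)) x)] =
        gsmul a (int (v k)) x"
      by (simp add: gsum_def gneg_smul gadd_zero gadd_smul)
    then show ?thesis
      by (simp add: A_def Mhat_def P_def P'_def F_def gneg_smul mult_ac)
  qed
  have Beq: "B k = P k ^ 2 * P' (k + 1)" if k: "k \<ge> 1" for k
  proof -
    have c1: "[2 ^ k = u k + v k] (mod N)" using uv_sum k by (simp add: N_def)
    have k1: "k + 1 \<ge> 1" by simp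
    have c2: "[2 ^ (k + 1) = u (k + 1) + v (k + 1)] (mod N)" using uv_sum k1 unfolding N_def by blast
    have d1: "int N dvd int (u k) + int (v k) - 2 ^ k"
      using c1 by (metis cong_int_iff cong_iff_dvd_diff cong_sym of_nat_add of_nat_numeral of_nat_power)
    have d2: "int N dvd int (u (k + 1)) + int (v (k + 1)) - 2 ^ (k + 1)"
      using c2 by (metis cong_int_iff cong_iff_dvd_diff cong_sym of_nat_add of_nat_numeral of_nat_power)
    have eqn: "- (int (u k) + (int (v k) + (int (u k) + (int (v k) + - int (u (k + 1)))))) - (- int (v (k + 1))) =
        (int (u (k + 1)) + int (v (k + 1)) - 2 ^ (k + 1)) - 2 * (int (u k) + int (v k) - 2 ^ k)"
      by (simp add: algebra_simps)
    have "int N dvd - (int (u k) + (int (v k) + (int (u k) + (int (v k) + - int (u (k + 1)))))) - (- int (v (k + 1)))"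
      unfolding eqn by (rule dvd_diff[OF d2 dvd_mult[OF d1, of 2]])
    then have "[- (int (u k) + (int (v k) + (int (u k) + (int (v k) + - int (u (k + 1)))))) = - int (v (k + 1))] (mod int N)"
      by (simp add: cong_iff_dvd_diff)
    then have g: "gsmul a (- (int (u k) + (int (v k) + (int (u k) + (int (v k) + - int (u (k + 1))))))) x =
        gsmul a (- int (v (k + 1))) x"
      by (rule gsmul_cong[OF dvdN])
    have "gneg a (gsum a [gsmul a (int (u k)) x, gsmul a (int (v k)) x, gsmul a (int (u k)) x,
       gsmul a (int (v k)) x, gneg a (gsmul a (int (u (k + 1))) x)]) = gsmul a (- int (v (k + 1))) x"
      unfolding g[symmetric] by (simp only: gsum_def foldr.simps o_def id_apply gneg_smul gadd_zero gadd_smul)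
    then show ?thesis
      by (simp add: B_def Mhat_def P_def P'_def F_def gneg_smul mult_ac power2_eq_square)
  qed
  have ratio: "B k / A (k + 1) = P k ^ 2 / P (k + 1)" if k: "k \<ge> 1" for k
    using Pnz[of "k + 1"] by (simp add: Aeq Beq[OF k])
  have P1: "P 1 = fhat a f x ^ 2"
    unfolding P_def F_def uv1 by (simp add: gsmul_one[OF xG] power2_eq_square)
  have per: "P (l + m) = P m"
    using uv_per by (simp add: P_def l_def m_def N_def add.commute)
  have c1: "\<forall>k\<in>{1..l + m - 1}. A (k + 1) \<noteq> 0"
    using Pnz by (auto simp: Aeq)
  have T1: "(\<Prod>k = 1..l + m - 1. (B k / A (k + 1)) ^ (2 ^ (l + m - 1 - k))) =
      P 1 ^ (2 ^ (l + m - 1)) / P (l + m)"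
  proof -
    have "(\<Prod>k = 1..l + m - 1. (B k / A (k + 1)) ^ (2 ^ (l + m - 1 - k))) =
        (\<Prod>k = 1..l + m - 1. (P k ^ 2 / P (k + 1)) ^ (2 ^ (l + m - 1 - k)))"
    proof (rule prod.cong[OF refl])
      fix k assume "k \<in> {1..l + m - 1}"
      then have k1: "k \<ge> 1" by simp
      show "(B k / A (k + 1)) ^ (2 ^ (l + m - 1 - k)) = (P k ^ 2 / P (k + 1)) ^ (2 ^ (l + m - 1 - k))"
        by (simp only: ratio[OF k1])
    qed
    also have "\<dots> = P 1 ^ (2 ^ (l + m - 1)) / P (l + m - 1 + 1)"
      by (intro telescope ballI Pnz(1)) simp
    finally show ?thesis using m1 by simp
  qed
  have T2: "(\<Prod>k = 1..m - 1. (B k / A (k + 1)) ^ (2 ^ (m - 1 - k))) = P 1 ^ (2 ^ (m - 1)) / P m"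
  proof -
    have "(\<Prod>k = 1..m - 1. (B k / A (k + 1)) ^ (2 ^ (m - 1 - k))) =
        (\<Prod>k = 1..m - 1. (P k ^ 2 / P (k + 1)) ^ (2 ^ (m - 1 - k)))"
    proof (rule prod.cong[OF refl])
      fix k assume "k \<in> {1..m - 1}"
      then have k1: "k \<ge> 1" by simp
      show "(B k / A (k + 1)) ^ (2 ^ (m - 1 - k)) = (P k ^ 2 / P (k + 1)) ^ (2 ^ (m - 1 - k))"
        by (simp only: ratio[OF k1])
    qed
    also have "\<dots> = P 1 ^ (2 ^ (m - 1)) / P (m - 1 + 1)"
      by (intro telescope ballI Pnz(1)) simp
    finally show ?thesis using m1 by simp
  qed
  define fx where "fx = fhat a f x"
  have fxnz: "fx \<noteq> 0" using xsupp by (simp add: fx_def)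
  have e1: "P 1 ^ (2 ^ (l + m - 1)) = fx ^ (2 ^ (l + m))"
  proof -
    have "P 1 ^ (2 ^ (l + m - 1)) = fx ^ (2 * 2 ^ (l + m - 1))" unfolding P1 fx_def by (simp only: power_mult)
    also have "2 * 2 ^ (l + m - 1) = (2 :: nat) ^ (l + m)" using m1
      by (metis Suc_diff_1 add_gr_0 less_le_trans zero_less_one power_Suc)
    finally show ?thesis .
  qed
  have e2: "P 1 ^ (2 ^ (m - 1)) = fx ^ (2 ^ m)"
  proof -
    have "P 1 ^ (2 ^ (m - 1)) = fx ^ (2 * 2 ^ (m - 1))" unfolding P1 fx_def by (simp only: power_mult)
    also have "2 * 2 ^ (m - 1) = (2 :: nat) ^ m" using m1
      by (metis Suc_diff_1 less_le_trans zero_less_one power_Suc)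
    finally show ?thesis .
  qed
  have Pm: "P m \<noteq> 0" using Pnz m1 by blast
  have c2: "fx ^ (2 ^ m * (2 ^ l - 1)) =
      (\<Prod>k = 1..l + m - 1. (B k / A (k + 1)) ^ (2 ^ (l + m - 1 - k))) /
      (\<Prod>k = 1..m - 1. (B k / A (k + 1)) ^ (2 ^ (m - 1 - k)))"
  proof -
    have ex: "2 ^ m * (2 ^ l - 1) = (2 :: nat) ^ (l + m) - 2 ^ m"
      by (simp add: diff_mult_distrib2 power_add mult.commute)
    have le: "(2 :: nat) ^ m \<le> 2 ^ (l + m)" by (simp add: power_increasing)
    have "fx ^ (2 ^ m * (2 ^ l - 1)) = fx ^ (2 ^ (l + m)) / fx ^ (2 ^ m)"
      unfolding ex using power_diff[OF fxnz le] by simp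
    also have "\<dots> = (P 1 ^ (2 ^ (l + m - 1)) / P (l + m)) / (P 1 ^ (2 ^ (m - 1)) / P m)"
      unfolding e1 e2 per using Pm by simp
    finally show ?thesis unfolding T1 T2 .
  qed
  show ?thesis
    unfolding Let_def N_def[symmetric] m_def[symmetric] l_def[symmetric]
    using c1 c2 unfolding A_def B_def fx_def by simp
qed


end
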